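(* Under the standing setup in the context, there are constants $K\ge1$ and $C\ge0$ such that \[\frac1K\rho(x,y)-C\le\rho_\phi([x],[y])\le K\rho(x,y)+C\quad\text{for all }x,y\in X.\] Consequently the collapsing map $\phi:X\to X^*$, $\phi(x)=[x]$, is a quasi-isometry between $(X,\rho)$ and $(X^*,\rho_\phi)$.
   Context: A semi-metric on a set $Z$ is a function $d:Z\times Z\to[0,\infty)$ with $d(x,y)=0$ iff $x=y$ and $d(x,y)=d(y,x)$. For $b\ge1$, $c\ge0$, a $(b,c)$-metric is a semi-metric with $d(x,z)\le b(d(x,y)+d(y,z))+c$ for all $x,y,z$. A map $g$ from a $(b,c)$-metric space $(X,\rho)$ to a semi-metric space $(Y,\sigma)$ is a quasi-isometry if there are $K\ge1$, $C\ge0$ with $\frac1K\rho(x,y)-C\le\sigma(g(x),g(y))\le K\rho(x,y)+C$ for all $x,y$. Standing setup. $X$ is a topological space (in the paper an $n$-manifold) carrying a $(b,c)$-metric $\rho$. A collapsing set consists of: a subset $S\subseteq X$; a family $\mathcal F$ of pairwise disjoint nonempty subsets of $S$ ("fibers") whose union is $S$; and a subset $T\subseteq S$ meeting each fiber in exactly one point. The fibering is bounded: $f:=\sup_{F\in\mathcal F}\sup_{u,v\in F}\rho(u,v)<\infty$. For $a,a'\in T$, the length of a continuous path $\gamma:[0,1]\to T$ is $\ell(\gamma)=\sup\sum_{i=1}^k\rho(\gamma(t_{i-1}),\gamma(t_i))$ over partitions $0=t_0<\dots<t_k=1$, and $\rho_p(a,a')$ is the infimum of $\ell(\gamma)$ over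 continuous paths in $T$ from $a$ to $a'$. $T$ is a Lipschitz curve: there is $L\ge1$ with $\rho_p(a,a')\le L\,\rho(a,a')$ for all $a,a'\in T$. The collapsing relation is $x\sim y$ iff $x=y$ or $x,y$ lie in a common fiber; $X^*=X/\!\sim$, $\phi(x)=[x]$. For $x\in X$ let $r_x=\inf_{s\in S}\rho(x,s)$; assume this infimum is attained and fix $x_S\in S$ with $\rho(x,x_S)=r_x$, taking $x_S=x$ when $x\in S$. Let $x'$ denote the unique point of $T$ in the fiber containing $x_S$. The collapsed metric is $\rho_\phi([x],[y])=\rho(x,y)$ if $x,y\notin S$ and $\rho(x,y)\le r_x+r_y$, and $\rho_\phi([x],[y])=\rho_p(x',y')+r_x+r_y$ otherwise. *)

theory Defs
  imports "HOL-Analysis.Analysis" "HOL-Library.Extended_Real"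
begin

definition semi_metric :: "('a \<Rightarrow> 'a \<Rightarrow> real) \<Rightarrow> bool" where
  "semi_metric d \<longleftrightarrow> (\<forall>x y. d x y \<ge> 0 \<and> (d x y = 0 \<longleftrightarrow> x = y) \<and> d x y = d y x)"

definition bc_metric :: "real \<Rightarrow> real \<Rightarrow> ('a \<Rightarrow> 'a \<Rightarrow> real) \<Rightarrow> bool" where
  "bc_metric b c d \<longleftrightarrow> b \<ge> 1 \<and> c \<ge> 0 \<and> semi_metric d \<and>
     (\<forall>x y z. d x z \<le> b * (d x y + d y z) + c)"

definition quasi_isometry :: "'a set \<Rightarrow> ('a \<Rightarrow> 'a \<Rightarrow> real) \<Rightarrow> ('b \<Rightarrow> 'b \<Rightarrow> real) \<Rightarrow> ('a \<Rightarrow> 'b) \<Rightarrow> bool" where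
  "quasi_isometry X rho sg g \<longleftrightarrow> (\<exists>K C. K \<ge> 1 \<and> C \<ge> 0 \<and>
     (\<forall>x\<in>X. \<forall>y\<in>X. rho x y / K - C \<le> sg (g x) (g y) \<and> sg (g x) (g y) \<le> K * rho x y + C))"

definition partitions01 :: "(nat \<times> (nat \<Rightarrow> real)) set" where
  "partitions01 = {(k, t). k \<ge> 1 \<and> t 0 = 0 \<and> t k = 1 \<and> (\<forall>i<k. t i < t (Suc i))}"

definition path_length :: "('a \<Rightarrow> 'a \<Rightarrow> real) \<Rightarrow> (real \<Rightarrow> 'a) \<Rightarrow> ereal" where
  "path_length rho \<gamma> = (SUP p \<in> partitions01.
      ereal (\<Sum>i\<in>{1..fst p}. rho (\<gamma> (snd p (i - 1))) (\<gamma> (snd p i))))"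

definition rho_p :: "('a::topological_space \<Rightarrow> 'a \<Rightarrow> real) \<Rightarrow> 'a set \<Rightarrow> 'a \<Rightarrow> 'a \<Rightarrow> ereal" where
  "rho_p rho T a a' = (INF \<gamma> \<in> {\<gamma>. continuous_on {0..1} \<gamma> \<and> \<gamma> ` {0..1} \<subseteq> T \<and> \<gamma> 0 = a \<and> \<gamma> 1 = a'}.
      path_length rho \<gamma>)"

definition dist_to :: "('a \<Rightarrow> 'a \<Rightarrow> real) \<Rightarrow> 'a set \<Rightarrow> 'a \<Rightarrow> real" where
  "dist_to rho S x = Inf (rho x ` S)"

definition tpoint :: "'a set set \<Rightarrow> 'a set \<Rightarrow> ('a \<Rightarrow> 'a) \<Rightarrow> 'a \<Rightarrow> 'a" where
  "tpoint Fs T xS x = (THE t. t \<in> T \<and> (\<exists>F\<in>Fs. xS x \<in> F \<and> t \<in> F))"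

text \<open>Collapsed metric, written on representatives x, y of the classes [x], [y].\<close>
definition rho_phi :: "('a::topological_space \<Rightarrow> 'a \<Rightarrow> real) \<Rightarrow> 'a set \<Rightarrow> 'a set set \<Rightarrow> 'a set
     \<Rightarrow> ('a \<Rightarrow> 'a) \<Rightarrow> 'a \<Rightarrow> 'a \<Rightarrow> real" where
  "rho_phi rho S Fs T xS x y =
     (if x \<notin> S \<and> y \<notin> S \<and> rho x y \<le> dist_to rho S x + dist_to rho S y then rho x y
      else real_of_ereal (rho_p rho T (tpoint Fs T xS x) (tpoint Fs T xS y))
           + dist_to rho S x + dist_to rho S y)"

definition collapse_rel :: "'a set set \<Rightarrow> ('a \<times> 'a) set" where
  "collapse_rel Fs = {(x, y). x = y \<or> (\<exists>F\<in>Fs. x \<in> F \<and> y \<in> F)}"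

definition collapse_map :: "'a set set \<Rightarrow> 'a \<Rightarrow> 'a set" where
  "collapse_map Fs x = collapse_rel Fs `` {x}"

definition rho_star :: "('a::topological_space \<Rightarrow> 'a \<Rightarrow> real) \<Rightarrow> 'a set \<Rightarrow> 'a set set \<Rightarrow> 'a set
     \<Rightarrow> ('a \<Rightarrow> 'a) \<Rightarrow> 'a set \<Rightarrow> 'a set \<Rightarrow> real" where
  "rho_star rho S Fs T xS A B =
     rho_phi rho S Fs T xS (SOME x. A = collapse_map Fs x) (SOME y. B = collapse_map Fs y)"

end

theory Submission
  imports Defs
begin

lemma bc_facts:
  assumes "bc_metric b c rho"
  shows "b \<ge> 1" "c \<ge> 0" "\<And>x y. rho x y \<ge> 0" "\<And>x. rho x x = 0" "\<And>x y. rho x y = rho y x"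
    "\<And>x y z. rho x z \<le> b * (rho x y + rho y z) + c"
  using assms unfolding bc_metric_def semi_metric_def by metis+

lemma chain_step:
  assumes bc: "bc_metric b c rho" and h: "rho p z \<le> BB * sv + CC" and "BB \<ge> 1" "CC \<ge> 0" "sv \<ge> 0"
  shows "rho q z \<le> (b*BB)*(rho q p + sv) + (b*CC + c)"
proof -
  note f = bc_facts[OF bc]
  have 1: "rho q z \<le> b * (rho q p + rho p z) + c" by (rule f(6))
  have 2: "b * rho p z \<le> b * (BB * sv + CC)" using h f(1) by (simp add: mult_left_mono)
  have 30: "rho q p \<le> BB * rho q p"
    using mult_right_mono[OF \<open>BB\<ge>1\<close> f(3)[of q p]] by simp
  have 3: "b * rho q p \<le> (b*BB) * rho q p"
    using mult_left_mono[OF 30, of b] f(1) by (simp add: mult.assoc)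
  show ?thesis using 1 2 3 by (simp add: algebra_simps)
qed

lemma one_le_mult': "1 \<le> (x::real) \<Longrightarrow> 1 \<le> y \<Longrightarrow> 1 \<le> x * y"
  using mult_mono[of 1 x 1 y] by simp

lemma chain6:
  assumes bc: "bc_metric b c rho"
  shows "\<exists>B C. B \<ge> 1 \<and> C \<ge> 0 \<and> (\<forall>p0 p1 p2 p3 p4 p5. rho p0 p5 \<le>
     B * (rho p0 p1 + rho p1 p2 + rho p2 p3 + rho p3 p4 + rho p4 p5) + C)"
proof -
  note f = bc_facts[OF bc]
  define B1 where "B1 = b" define C1 where "C1 = c"
  define B2 where "B2 = b*B1" define C2 where "C2 = b*C1 + c"
  define B3 where "B3 = b*B2" define C3 where "C3 = b*C2 + c"
  define B4 where "B4 = b*B3" define C4 where "C4 = b*C3 + c"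
  have g1: "B1 \<ge> 1" "C1 \<ge> 0" using f by (auto simp: B1_def C1_def)
  have g2: "B2 \<ge> 1" "C2 \<ge> 0" using f g1 by (auto simp: B2_def C2_def one_le_mult')
  have g3: "B3 \<ge> 1" "C3 \<ge> 0" using f g2 by (auto simp: B3_def C3_def one_le_mult')
  have g4: "B4 \<ge> 1" "C4 \<ge> 0" using f g3 by (auto simp: B4_def C4_def one_le_mult')
  show ?thesis
  proof (intro exI conjI allI)
    fix p0 p1 p2 p3 p4 p5
    have s0: "rho p4 p5 \<le> 1 * rho p4 p5 + 0" by simp
    have s1: "rho p3 p5 \<le> B1 * (rho p3 p4 + rho p4 p5) + C1"
      unfolding B1_def C1_def by (rule f(6))
    have s2: "rho p2 p5 \<le> B2 * (rho p2 p3 + (rho p3 p4 + rho p4 p5)) + C2"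
      using chain_step[OF bc s1 g1] f by (simp add: B2_def C2_def)
    have s3: "rho p1 p5 \<le> B3 * (rho p1 p2 + (rho p2 p3 + (rho p3 p4 + rho p4 p5))) + C3"
      using chain_step[OF bc s2 g2] f by (simp add: B3_def C3_def add_nonneg_nonneg)
    have s4: "rho p0 p5 \<le> B4 * (rho p0 p1 + (rho p1 p2 + (rho p2 p3 + (rho p3 p4 + rho p4 p5)))) + C4"
      using chain_step[OF bc s3 g3] f by (simp add: B4_def C4_def add_nonneg_nonneg)
    then show "rho p0 p5 \<le> B4 * (rho p0 p1 + rho p1 p2 + rho p2 p3 + rho p3 p4 + rho p4 p5) + C4"
      by (simp add: add.assoc)
  qed (use g4 in auto)
qed

lemma path_length_ge: fixes rho :: "'a \<Rightarrow> 'a \<Rightarrow> real" and \<gamma> :: "real \<Rightarrow> 'a"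
  shows "ereal (rho (\<gamma> 0) (\<gamma> 1)) \<le> path_length rho \<gamma>"
proof -
  have "(1::nat, \<lambda>i. real i) \<in> partitions01" by (simp add: partitions01_def)
  then have "ereal (\<Sum>i\<in>{1..fst (1::nat, \<lambda>i::nat. real i)}. rho (\<gamma> (snd (1::nat, \<lambda>i::nat. real i) (i - 1))) (\<gamma> (snd (1::nat, \<lambda>i::nat. real i) i)))
      \<le> path_length rho \<gamma>"
    unfolding path_length_def by (rule SUP_upper)
  then show ?thesis by simp
qed

lemma rho_p_ge: fixes rho :: "'a::topological_space \<Rightarrow> 'a \<Rightarrow> real"
  shows "ereal (rho a a') \<le> rho_p rho T a a'"
  unfolding rho_p_def
proof (rule INF_greatest)
  fix \<gamma> :: "real \<Rightarrow> 'a" assume "\<gamma> \<in> {\<gamma>. continuous_on {0..1} \<gamma> \<and> \<gamma> ` {0..1} \<subseteq> T \<and> \<gamma> 0 = a \<and> \<gamma> 1 = a'}"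
  then have "\<gamma> 0 = a" "\<gamma> 1 = a'" by auto
  with path_length_ge[of rho \<gamma>] show "ereal (rho a a') \<le> path_length rho \<gamma>" by simp
qed

lemma ereal_between: "ereal u \<le> e \<Longrightarrow> e \<le> ereal v \<Longrightarrow> u \<le> real_of_ereal e \<and> real_of_ereal e \<le> v"
  by (cases e) auto

lemma div_bound: "(K::real) > 0 \<Longrightarrow> r \<le> K * (p + C) \<Longrightarrow> r / K - C \<le> p"
  by (simp add: field_simps)

theorem mainTheorem9:
  fixes rho :: "'a::topological_space \<Rightarrow> 'a \<Rightarrow> real"
    and b c :: real
    and S T :: "'a set"
    and Fs :: "'a set set"
    and xS :: "'a \<Rightarrow> 'a"
  assumes bc: "bc_metric b c rho"
    and fibers_sub: "\<Union>Fs = S"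
    and fibers_disj: "\<forall>F\<in>Fs. \<forall>G\<in>Fs. F \<noteq> G \<longrightarrow> F \<inter> G = {}"
    and fibers_ne: "\<forall>F\<in>Fs. F \<noteq> {}"
    and T_sub: "T \<subseteq> S"
    and T_fiber: "\<forall>F\<in>Fs. \<exists>!t. t \<in> T \<inter> F"
    and bounded: "\<exists>f. \<forall>F\<in>Fs. \<forall>u\<in>F. \<forall>v\<in>F. rho u v \<le> f"
    and lipschitz: "\<exists>L\<ge>1. \<forall>a\<in>T. \<forall>a'\<in>T. rho_p rho T a a' \<le> ereal (L * rho a a')"
    and xS_in: "\<forall>x. xS x \<in> S"
    and xS_min: "\<forall>x. rho x (xS x) = dist_to rho S x"
    and xS_id: "\<forall>x\<in>S. xS x = x"
  shows "(\<exists>K C. K \<ge> 1 \<and> C \<ge> 0 \<and> (\<forall>x y.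
            rho x y / K - C \<le> rho_phi rho S Fs T xS x y \<and>
            rho_phi rho S Fs T xS x y \<le> K * rho x y + C))
       \<and> quasi_isometry UNIV rho (rho_star rho S Fs T xS) (collapse_map Fs)"
proof -
  note bf = bc_facts[OF bc]
  obtain f0 where f0: "\<forall>F\<in>Fs. \<forall>u\<in>F. \<forall>v\<in>F. rho u v \<le> f0" using bounded by blast
  define f where "f = max f0 0"
  have fF: "\<And>F u v. F \<in> Fs \<Longrightarrow> u \<in> F \<Longrightarrow> v \<in> F \<Longrightarrow> rho u v \<le> f"
    using f0 unfolding f_def by force
  have f_nn: "f \<ge> 0" by (simp add: f_def)
  obtain L where L1: "L \<ge> 1" and Lip: "\<forall>a\<in>T. \<forall>a'\<in>T. rho_p rho T a a' \<le> ereal (L * rho a a')"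
    using lipschitz by blast
  obtain B C where B1: "B \<ge> 1" and C0: "C \<ge> 0" and ch: "\<forall>p0 p1 p2 p3 p4 p5. rho p0 p5 \<le>
     B * (rho p0 p1 + rho p1 p2 + rho p2 p3 + rho p3 p4 + rho p4 p5) + C"
    using chain6[OF bc] by blast
  define r where "r = dist_to rho S"
  have r_eq: "\<And>x. r x = rho x (xS x)" using xS_min by (simp add: r_def)
  have r_nn: "\<And>x. r x \<ge> 0" using r_eq bf(3) by simp
  have r_le: "\<And>x s. s \<in> S \<Longrightarrow> r x \<le> rho x s"
    unfolding r_def dist_to_def
    by (rule cInf_lower) (auto intro!: bdd_belowI[where m=0] simp: bf(3))
  have r_S: "\<And>x. x \<in> S \<Longrightarrow> r x = 0" using r_eq xS_id bf(4) by simp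
  define tp where "tp = tpoint Fs T xS"
  have tp: "\<And>x. tp x \<in> T \<and> (\<exists>F\<in>Fs. xS x \<in> F \<and> tp x \<in> F)"
  proof -
    fix x
    obtain F where F: "F \<in> Fs" "xS x \<in> F" using xS_in fibers_sub by blast
    obtain t where t: "t \<in> T \<inter> F" using T_fiber F by blast
    have "\<exists>!t. t \<in> T \<and> (\<exists>F\<in>Fs. xS x \<in> F \<and> t \<in> F)"
    proof (rule ex1I[of _ t])
      show "t \<in> T \<and> (\<exists>F\<in>Fs. xS x \<in> F \<and> t \<in> F)" using t F by blast
    next
      fix t' assume "t' \<in> T \<and> (\<exists>F\<in>Fs. xS x \<in> F \<and> t' \<in> F)"
      then obtain G where G: "G \<in> Fs" "xS x \<in> G" "t' \<in> G" "t' \<in> T" by blast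
      have "G = F" using fibers_disj G F by blast
      then show "t' = t" using T_fiber F t G by blast
    qed
    then show "tp x \<in> T \<and> (\<exists>F\<in>Fs. xS x \<in> F \<and> tp x \<in> F)"
      unfolding tp_def tpoint_def by (rule theI')
  qed
  have tpf: "\<And>x. rho (xS x) (tp x) \<le> f" "\<And>x. rho (tp x) (xS x) \<le> f"
    using tp fF by blast+
  define P where "P x y = real_of_ereal (rho_p rho T (tp x) (tp y))" for x y
  have P: "\<And>x y. rho (tp x) (tp y) \<le> P x y \<and> P x y \<le> L * rho (tp x) (tp y)"
    unfolding P_def using ereal_between[OF rho_p_ge] Lip tp by blast
  have phi: "\<And>x y. rho_phi rho S Fs T xS x y =
     (if x \<notin> S \<and> y \<notin> S \<and> rho x y \<le> r x + r y then rho x y else P x y + r x + r y)"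
    unfolding rho_phi_def r_def P_def tp_def by simp
  define K where "K = 2*L*B + 1"
  define Cc where "Cc = 2*f + C + L*(2*B*f + C)"
  have K1: "K \<ge> 1" using L1 B1 by (simp add: K_def)
  have LB: "1 * B \<le> L * B" using L1 B1 by (intro mult_right_mono) auto
  have KB: "B \<le> K" using LB B1 L1 unfolding K_def by (simp only: mult_1_left mult.assoc)
  have Cc0: "Cc \<ge> 0" using L1 B1 f_nn C0 by (simp add: Cc_def)
  have main: "\<And>x y. rho x y \<le> K * (rho_phi rho S Fs T xS x y + Cc) \<and>
            rho_phi rho S Fs T xS x y \<le> K * rho x y + Cc"
  proof -
    fix x y
    show "rho x y \<le> K * (rho_phi rho S Fs T xS x y + Cc) \<and>
            rho_phi rho S Fs T xS x y \<le> K * rho x y + Cc"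
    proof (cases "x \<notin> S \<and> y \<notin> S \<and> rho x y \<le> r x + r y")
      case True
      then have e: "rho_phi rho S Fs T xS x y = rho x y" using phi by simp
      have "rho x y \<le> K * rho x y" using K1 bf(3)[of x y] by (simp add: mult_le_cancel_right1)
      moreover have "K * rho x y \<le> K * (rho x y + Cc)" using K1 Cc0 by simp
      ultimately show ?thesis using e Cc0 by simp
    next
      case False
      then have e: "rho_phi rho S Fs T xS x y = P x y + r x + r y" using phi by auto
      have rr: "r x + r y \<le> rho x y"
      proof (cases "x \<in> S")
        case True then show ?thesis using r_S r_le[of x y] bf(5) by simp
      next
        case nx: False
        show ?thesis
        proof (cases "y \<in> S")
          case True then show ?thesis using r_S r_le[of y x] bf(5) by simp
        next
          case False then show ?thesis using nx \<open>\<not> (x \<notin> S \<and> y \<notin> S \<and> rho x y \<le> r x + r y)\<close> by simp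
        qed
      qed
      have c1: "rho (tp x) (tp y) \<le> B * (rho (tp x) (xS x) + rho (xS x) x + rho x y + rho y (xS y) + rho (xS y) (tp y)) + C"
        using ch by blast
      have "rho (xS x) x = r x" "rho y (xS y) = r y" using r_eq bf(5) by auto
      with c1 tpf have c1': "rho (tp x) (tp y) \<le> B * (2*f + 2 * rho x y) + C"
        using rr B1 by (smt (verit) mult_left_mono)
      have up1: "P x y \<le> L * (B * (2*f + 2 * rho x y) + C)"
        using P[of x y] c1' L1 by (smt (verit) mult_left_mono)
      have up: "rho_phi rho S Fs T xS x y \<le> K * rho x y + Cc"
        using e up1 rr f_nn C0 unfolding K_def Cc_def by (simp add: algebra_simps)
      have c2: "rho x y \<le> B * (rho x (xS x) + rho (xS x) (tp x) + rho (tp x) (tp y) + rho (tp y) (xS y) + rho (xS y) y) + C"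
        using ch by blast
      have "rho (xS y) y = r y" using r_eq bf(5) by auto
      with c2 tpf r_eq P[of x y] have c2': "rho x y \<le> B * (rho_phi rho S Fs T xS x y + 2*f) + C"
        using e B1 by (smt (verit) mult_left_mono)
      have phin: "rho_phi rho S Fs T xS x y \<ge> 0" using e P[of x y] bf(3) r_nn
        by (smt (verit))
      have "B * (rho_phi rho S Fs T xS x y + 2*f) + C \<le> K * (rho_phi rho S Fs T xS x y + Cc)"
      proof -
        have "B * (rho_phi rho S Fs T xS x y + 2*f) \<le> K * (rho_phi rho S Fs T xS x y + 2*f)"
          using KB phin f_nn by (simp add: mult_right_mono)
        moreover have "K * (rho_phi rho S Fs T xS x y + 2*f) + C \<le> K * (rho_phi rho S Fs T xS x y + 2*f + C)"
          using mult_right_mono[OF K1 C0] by (simp add: algebra_simps)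
        moreover have "2*f + C \<le> Cc" using L1 B1 f_nn C0 unfolding Cc_def by simp
        then have "K * (rho_phi rho S Fs T xS x y + 2*f + C) \<le> K * (rho_phi rho S Fs T xS x y + Cc)"
          using K1 by simp
        ultimately show ?thesis by linarith
      qed
      with c2' up show ?thesis by linarith
    qed
  qed
  have part1: "\<exists>K C. K \<ge> 1 \<and> C \<ge> 0 \<and> (\<forall>x y.
            rho x y / K - C \<le> rho_phi rho S Fs T xS x y \<and>
            rho_phi rho S Fs T xS x y \<le> K * rho x y + C)"
    using main K1 Cc0 div_bound[of K] by (intro exI[of _ K] exI[of _ Cc]) auto
  define rep where "rep x = (SOME z. collapse_map Fs x = collapse_map Fs z)" for x
  have rep: "\<And>x. rho x (rep x) \<le> f \<and> rho (rep x) x \<le> f"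
  proof -
    fix x
    have "collapse_map Fs x = collapse_map Fs (rep x)"
      unfolding rep_def by (rule someI[of _ x]) simp
    moreover have "rep x \<in> collapse_map Fs (rep x)"
      unfolding collapse_map_def collapse_rel_def by simp
    ultimately have "rep x \<in> collapse_map Fs x" by simp
    then have "x = rep x \<or> (\<exists>F\<in>Fs. x \<in> F \<and> rep x \<in> F)"
      unfolding collapse_map_def collapse_rel_def by simp
    then show "rho x (rep x) \<le> f \<and> rho (rep x) x \<le> f" using fF bf(4) f_nn by auto
  qed
  have rs: "\<And>x y. rho_star rho S Fs T xS (collapse_map Fs x) (collapse_map Fs y) = rho_phi rho S Fs T xS (rep x) (rep y)"
    unfolding rho_star_def rep_def by simp
  define K2 where "K2 = K * B"
  define C2 where "C2 = K*(2*B*f + C) + Cc + Cc + 2*B*f + C"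
  have K21: "K2 \<ge> 1" using K1 B1 by (simp add: K2_def one_le_mult')
  have C20: "C2 \<ge> 0" using K1 B1 f_nn C0 Cc0 by (simp add: C2_def)
  have part2: "quasi_isometry UNIV rho (rho_star rho S Fs T xS) (collapse_map Fs)"
    unfolding quasi_isometry_def
  proof (rule exI[of _ K2], rule exI[of _ C2], intro conjI ballI)
    show "K2 \<ge> 1" by (rule K21)
    show "C2 \<ge> 0" by (rule C20)
    fix x y :: 'a
    define ph where "ph = rho_phi rho S Fs T xS (rep x) (rep y)"
    have m: "rho (rep x) (rep y) \<le> K * (ph + Cc)" "ph \<le> K * rho (rep x) (rep y) + Cc"
      using main unfolding ph_def by auto
    have d1: "rho (rep x) (rep y) \<le> B * (rho (rep x) x + rho x x + rho x y + rho y y + rho y (rep y)) + C"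
      using ch by blast
    have d1': "rho (rep x) (rep y) \<le> B * (2*f + rho x y) + C"
      using d1 rep[of x] rep[of y] bf(4) B1 by (smt (verit) mult_left_mono)
    have d2: "rho x y \<le> B * (rho x (rep x) + rho (rep x) (rep x) + rho (rep x) (rep y) + rho (rep y) (rep y) + rho (rep y) y) + C"
      using ch by blast
    have d2': "rho x y \<le> B * (2*f + K * (ph + Cc)) + C"
      using d2 rep[of x] rep[of y] bf(4) B1 m(1) by (smt (verit) mult_left_mono)
    have up: "ph \<le> K2 * rho x y + C2"
    proof -
      have "ph \<le> K * (B * (2*f + rho x y) + C) + Cc"
        using m(2) d1' K1 by (smt (verit) mult_left_mono)
      also have "\<dots> = K2 * rho x y + (K*(2*B*f + C) + Cc)" by (simp add: K2_def algebra_simps)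
      also have "\<dots> \<le> K2 * rho x y + C2" using Cc0 B1 f_nn C0 by (simp add: C2_def)
      finally show ?thesis .
    qed
    have phn: "ph + Cc \<ge> 0" using m(1) bf(3)[of "rep x" "rep y"] K1
      by (smt (verit) mult_nonneg_nonneg zero_le_mult_iff)
    have lo: "rho x y \<le> K2 * (ph + C2)"
    proof -
      have "rho x y \<le> K2 * (ph + Cc) + (2*B*f + C)" using d2' by (simp add: K2_def algebra_simps)
      also have "\<dots> \<le> K2 * (ph + Cc) + K2 * (2*B*f + C)"
      proof -
        have "0 \<le> 2*B*f + C" using B1 f_nn C0 by simp
        then have "1 * (2*B*f + C) \<le> K2 * (2*B*f + C)" using K21 by (intro mult_right_mono) auto
        then show ?thesis by simp
      qed
      also have "\<dots> = K2 * (ph + Cc + 2*B*f + C)" by (simp add: algebra_simps)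
      also have "\<dots> \<le> K2 * (ph + C2)" using K21 K1 B1 f_nn C0 Cc0
        by (intro mult_left_mono) (auto simp: C2_def)
      finally show ?thesis .
    qed
    show "rho x y / K2 - C2 \<le> rho_star rho S Fs T xS (collapse_map Fs x) (collapse_map Fs y)"
      using div_bound[OF _ lo] K21 rs ph_def by simp
    show "rho_star rho S Fs T xS (collapse_map Fs x) (collapse_map Fs y) \<le> K2 * rho x y + C2"
      using up rs ph_def by simp
  qed
  show ?thesis using part1 part2 by blast
qed

end
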